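(* Let $\{V_n:n\in\mathbb N\}$ be a family of pairwise disjoint countable subsets of the open square $(-1,1)^2$, and $\{W_n:n\in\mathbb N\}$ a family of pairwise disjoint subsets of $(-1,1)^2$, such that for each $n\in\mathbb N$ both $V_n$ and $W_n$ are dense in $[-1,1]^2$. Then for any $\lambda>1$ and any $\varepsilon>0$ there exists a $\lambda$-homeomorphism $h:[-1,1]^2\to[-1,1]^2$ such that $h|\partial [-1,1]^2=\mathrm{id}$, $d(h(x),x)<\varepsilon$ for every $x\in[-1,1]^2$, and $h(V_n)\subset W_n$ for every $n\in\mathbb N$.
   Context: $d$ is the Euclidean metric and $\partial[-1,1]^2$ is the boundary of the square. For $\lambda\ge1$, a bijection $h:X\to Y$ between metric spaces $(X,d)$, $(Y,\rho)$ is a $\lambda$-homeomorphism if $d(x,y)/\lambda\le \rho(h(x),h(y))\le\lambda d(x,y)$ for all $x,y\in X$. *)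

theory Defs
  imports "HOL-Analysis.Analysis"
begin

text \<open>The plane is modelled as real \<times> real, whose dist is the Euclidean metric.\<close>

definition sq :: "(real \<times> real) set" where
  "sq = cbox (-1, -1) (1, 1)"

definition open_sq :: "(real \<times> real) set" where
  "open_sq = box (-1, -1) (1, 1)"

definition lambda_homeo :: "real \<Rightarrow> ('a::metric_space \<Rightarrow> 'b::metric_space) \<Rightarrow> 'a set \<Rightarrow> 'b set \<Rightarrow> bool" where
  "lambda_homeo L h X Y \<longleftrightarrow> bij_betw h X Y \<and>
     (\<forall>x\<in>X. \<forall>y\<in>X. dist x y / L \<le> dist (h x) (h y) \<and> dist (h x) (h y) \<le> L * dist x y)"

end

theory Submission
  imports Defs
begin

lemma bump:
  fixes p :: "real \<times> real" and F W :: "(real \<times> real) set"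
  assumes p: "p \<in> open_sq" and fin: "finite F" and pF: "p \<notin> F"
    and c: "c > 0" and d: "\<delta> > 0" and dense: "sq \<subseteq> closure W"
  shows "\<exists>g. g p \<in> W \<and> (\<forall>x y. norm ((g x - x) - (g y - y)) \<le> c * dist x y)
     \<and> (\<forall>x. x \<notin> open_sq \<longrightarrow> g x = x) \<and> (\<forall>x\<in>F. g x = x)
     \<and> (\<forall>x\<in>open_sq. g x \<in> open_sq) \<and> (\<forall>x. dist (g x) x \<le> \<delta>)"
proof -
  have "open (open_sq - F)"
    unfolding open_sq_def using fin by (intro open_Diff open_box finite_imp_closed)
  moreover have "p \<in> open_sq - F" using p pF by simp
  ultimately obtain \<rho> where rho: "\<rho> > 0" "ball p \<rho> \<subseteq> open_sq - F"
    by (meson openE)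
  define r where "r = \<rho> / 2"
  have r: "r > 0" using rho r_def by simp
  have "open_sq \<subseteq> sq" unfolding open_sq_def sq_def by (rule box_subset_cbox)
  then have "p \<in> closure W" using p dense by blast
  moreover have "min r (min (c * r) \<delta>) > 0" using r c d by simp
  ultimately obtain q where q: "q \<in> W" "dist q p < min r (min (c * r) \<delta>)"
    using closure_approachable by blast
  define \<phi> where "\<phi> x = max 0 (1 - dist x p / r)" for x
  define g where "g x = x + \<phi> x *\<^sub>R (q - p)" for x
  have phi01: "0 \<le> \<phi> x" "\<phi> x \<le> 1" for x
    unfolding \<phi>_def using r by (auto simp: field_simps)
  have philip: "\<bar>\<phi> x - \<phi> y\<bar> \<le> dist x y / r" for x y
  proof -
    have a: "dist x p \<le> dist x y + dist y p" by (rule dist_triangle)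
    have b: "dist y p \<le> dist x y + dist x p" using dist_triangle[of y p x] by (simp add: dist_commute)
    have "\<bar>dist x p - dist y p\<bar> \<le> dist x y" using a b by (simp add: abs_le_iff)
    then have "\<bar>(1 - dist x p / r) - (1 - dist y p / r)\<bar> \<le> dist x y / r"
      using r by (simp add: field_simps abs_div_pos[symmetric] diff_divide_distrib[symmetric])
    then show ?thesis unfolding \<phi>_def by (smt (verit))
  qed
  have phi0: "dist x p \<ge> r \<Longrightarrow> \<phi> x = 0" for x
    unfolding \<phi>_def using r by (simp add: field_simps)
  have far: "dist x p \<ge> r" if "x \<notin> open_sq \<or> x \<in> F" for x
  proof (rule ccontr)
    assume "\<not> dist x p \<ge> r"
    then have "x \<in> ball p \<rho>" using r_def r by (simp add: dist_commute)
    then show False using rho that by blast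
  qed
  have nq: "norm (q - p) < min r (min (c * r) \<delta>)" using q by (simp add: dist_norm)
  show ?thesis
  proof (intro exI conjI allI ballI impI)
    show "g p \<in> W" unfolding g_def \<phi>_def using r q by simp
  next
    fix x y
    have "norm ((g x - x) - (g y - y)) = \<bar>\<phi> x - \<phi> y\<bar> * norm (q - p)"
      unfolding g_def by (simp add: scaleR_diff_left[symmetric])
    also have "\<dots> \<le> (dist x y / r) * (c * r)"
      using philip nq r by (intro mult_mono) auto
    also have "\<dots> = c * dist x y" using r by simp
    finally show "norm ((g x - x) - (g y - y)) \<le> c * dist x y" .
  next
    fix x assume "x \<notin> open_sq" then show "g x = x" using far phi0 g_def by simp
  next
    fix x assume "x \<in> F" then show "g x = x" using far phi0 g_def by simp
  next
    fix x assume x: "x \<in> open_sq"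
    show "g x \<in> open_sq"
    proof (cases "dist x p \<ge> r")
      case True then show ?thesis using phi0 g_def x by simp
    next
      case False
      have "dist (g x) p \<le> dist x p + norm (\<phi> x *\<^sub>R (q - p))"
        unfolding g_def dist_norm by (metis add.commute add_diff_eq norm_triangle_ineq)
      also have "norm (\<phi> x *\<^sub>R (q - p)) \<le> norm (q - p)"
        using phi01[of x] by (simp add: mult_left_le_one_le)
      finally have "dist (g x) p < \<rho>" using False nq r_def by simp
      then show ?thesis using rho by (auto simp: dist_commute)
    qed
  next
    fix x
    have "dist (g x) x = \<phi> x * norm (q - p)" unfolding g_def dist_norm using phi01[of x] by simp
    also have "\<dots> \<le> norm (q - p)" using phi01[of x] by (simp add: mult_left_le_one_le)
    finally show "dist (g x) x \<le> \<delta>" using nq by simp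
  qed
qed


lemma const_step:
  fixes \<eta> :: real and k :: nat
  assumes "\<eta> > 0"
  shows "\<eta> * (1 - (1/2)^k) + \<eta> * (1/2)^Suc k / (1 + \<eta>) * (1 + \<eta> * (1 - (1/2)^k))
         \<le> \<eta> * (1 - (1/2)^Suc k)"
proof -
  define t :: real where "t = (1/2)^k"
  have t: "0 < t" "t \<le> 1" unfolding t_def by (auto simp: power_le_one)
  have ts: "(1/2::real)^Suc k = t/2" unfolding t_def by simp
  have ne: "1 + \<eta> \<noteq> 0" using assms by simp
  have "\<eta> * (t/2) / (1 + \<eta>) * (1 + \<eta> * (1 - t)) \<le> \<eta> * (t/2) / (1 + \<eta>) * (1 + \<eta>)"
    using assms t by (intro mult_left_mono) (auto simp: mult_left_le_one_le)
  also have "\<dots> = \<eta> * (t/2)"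
  proof -
    have gen: "\<And>A B::real. B \<noteq> 0 \<Longrightarrow> A / B * B = A" by simp
    show ?thesis by (rule gen[OF ne])
  qed
  finally have X: "\<eta> * (t/2) / (1 + \<eta>) * (1 + \<eta> * (1 - t)) \<le> \<eta> * (t/2)" .
  have "\<eta> * (1 - t/2) = \<eta> * (1 - t) + \<eta> * (t/2)" by (simp add: algebra_simps)
  then show ?thesis unfolding ts t_def[symmetric] using X by linarith
qed

theorem lemma3p4:
  fixes V W :: "nat \<Rightarrow> (real \<times> real) set"
  assumes V_sub: "\<And>n. V n \<subseteq> open_sq"
    and V_count: "\<And>n. countable (V n)"
    and V_disj: "\<And>m n. m \<noteq> n \<Longrightarrow> V m \<inter> V n = {}"
    and W_sub: "\<And>n. W n \<subseteq> open_sq"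
    and W_disj: "\<And>m n. m \<noteq> n \<Longrightarrow> W m \<inter> W n = {}"
    and V_dense: "\<And>n. sq \<subseteq> closure (V n)"
    and W_dense: "\<And>n. sq \<subseteq> closure (W n)"
    and lam: "L > 1"
    and eps: "\<epsilon> > 0"
  shows "\<exists>h. lambda_homeo L h sq sq
            \<and> (\<forall>x\<in>sq - open_sq. h x = x)
            \<and> (\<forall>x\<in>sq. dist (h x) x < \<epsilon>)
            \<and> (\<forall>n. h ` V n \<subseteq> W n)"
proof -
  define \<eta> where "\<eta> = (L - 1) / (2 * L)"
  have eta: "0 < \<eta>" "\<eta> < 1" "1 + \<eta> \<le> L" "1 / L \<le> 1 - \<eta>"
    using lam mult_nonneg_nonneg[of "2*L-1" "L-1"] unfolding \<eta>_def by (auto simp: field_simps algebra_simps)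
  define s where "s k = \<eta> * (1 - (1/2)^k)" for k :: nat
  define c where "c k = \<eta> * (1/2)^Suc k / (1 + \<eta>)" for k :: nat
  define \<delta> where "\<delta> k = \<epsilon> / 4 * (1/2)^k" for k :: nat
  have s_le: "0 \<le> s k" "s k \<le> \<eta>" for k
    unfolding s_def using eta by (auto simp: power_le_one mult_left_le_one_le)
  have s_mono: "s k \<le> s (Suc k)" for k
    unfolding s_def using eta by (auto intro!: mult_left_mono simp: power_le_one)
  have c_pos: "c k > 0" for k unfolding c_def using eta by simp
  have d_pos: "\<delta> k > 0" for k unfolding \<delta>_def using eps by simp
  have sc: "s k + c k * (1 + s k) \<le> s (Suc k)" for k
    unfolding s_def c_def using const_step[OF eta(1)] by simp
  define U where "U = (\<Union>n. V n)"
  have U_count: "countable U" unfolding U_def using V_count by blast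
  have "(0, 0) \<in> sq" unfolding sq_def by simp
  then have "V 0 \<noteq> {}" using V_dense[of 0] by auto
  then have U_ne: "U \<noteq> {}" unfolding U_def by blast
  define e where "e = from_nat_into U"
  have e_range: "range e = U" unfolding e_def using U_count U_ne by simp
  define m where "m j = (SOME n. e j \<in> V n)" for j
  have m: "e j \<in> V (m j)" for j
  proof -
    have "e j \<in> U" using e_range by blast
    then have "\<exists>n. e j \<in> V n" unfolding U_def by blast
    then show ?thesis unfolding m_def by (rule someI_ex)
  qed
  have e_open: "e j \<in> open_sq" for j using m V_sub by blast
  define I where "I k f \<longleftrightarrow> (\<forall>x y. norm ((f x - x) - (f y - y)) \<le> s k * dist x y)
     \<and> (\<forall>x. x \<notin> open_sq \<longrightarrow> f x = x) \<and> (\<forall>x\<in>open_sq. f x \<in> open_sq)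
     \<and> (\<forall>j<k. f (e j) \<in> W (m j))" for k and f :: "real \<times> real \<Rightarrow> real \<times> real"
  define R where "R k f f' \<longleftrightarrow> (\<forall>x. dist (f' x) (f x) \<le> \<delta> k) \<and> (\<forall>j<k. f' (e j) = f (e j))"
    for k and f f' :: "real \<times> real \<Rightarrow> real \<times> real"
  have inj_I: "a = b" if "I k f" "f a = f b" for k f a b
  proof -
    have "norm ((f a - a) - (f b - b)) \<le> s k * dist a b" using that unfolding I_def by blast
    then have "dist a b \<le> s k * dist a b" using that(2) by (simp add: dist_norm norm_minus_commute)
    then have "(1 - s k) * dist a b \<le> 0" by (simp add: algebra_simps)
    moreover have "1 - s k > 0" using s_le[of k] eta(2) by simp
    ultimately have "dist a b \<le> 0" by (simp add: mult_le_0_iff)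
    then show ?thesis by simp
  qed
  have step: "\<exists>f'. I (Suc k) f' \<and> R k f f'" if If: "I k f" for k f
  proof (cases "f (e k) \<in> W (m k)")
    case True
    have lip: "norm ((f x - x) - (f y - y)) \<le> s (Suc k) * dist x y" for x y
    proof -
      have "norm ((f x - x) - (f y - y)) \<le> s k * dist x y" using If unfolding I_def by blast
      also have "\<dots> \<le> s (Suc k) * dist x y" using s_mono[of k] by (simp add: mult_right_mono)
      finally show ?thesis .
    qed
    have "I (Suc k) f"
      using If True lip unfolding I_def by (auto simp: less_Suc_eq)
    moreover have "R k f f" unfolding R_def using d_pos[of k] by simp
    ultimately show ?thesis by blast
  next
    case False
    define P where "P = f ` e ` {..<k}"
    have "f (e k) \<notin> P"
    proof
      assume "f (e k) \<in> P"
      then obtain j where j: "j < k" "f (e k) = f (e j)" unfolding P_def by auto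
      then have "e k = e j" using inj_I[OF If] by blast
      then have "m k = m j" unfolding m_def by simp
      moreover have "f (e j) \<in> W (m j)" using If j(1) unfolding I_def by blast
      ultimately show False using False j(2) by simp
    qed
    moreover have "f (e k) \<in> open_sq" using If e_open unfolding I_def by blast
    moreover have "finite P" unfolding P_def by simp
    ultimately obtain g where g: "g (f (e k)) \<in> W (m k)"
      "\<forall>x y. norm ((g x - x) - (g y - y)) \<le> c k * dist x y"
      "\<forall>x. x \<notin> open_sq \<longrightarrow> g x = x" "\<forall>x\<in>P. g x = x"
      "\<forall>x\<in>open_sq. g x \<in> open_sq" "\<forall>x. dist (g x) x \<le> \<delta> k"
      using bump[of "f (e k)" P "c k" "\<delta> k" "W (m k)", OF _ _ _ c_pos d_pos W_dense] by blast
    have "I (Suc k) (g \<circ> f)"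
      unfolding I_def
    proof (intro conjI allI impI ballI)
      fix x y
      have A: "norm ((f x - x) - (f y - y)) \<le> s k * dist x y" using If unfolding I_def by blast
      have B: "norm ((g (f x) - f x) - (g (f y) - f y)) \<le> c k * dist (f x) (f y)" using g by blast
      have "dist (f x) (f y) = norm ((x - y) + ((f x - x) - (f y - y)))"
        by (simp add: dist_norm algebra_simps)
      also have "\<dots> \<le> dist x y + s k * dist x y"
        using A norm_triangle_ineq[of "x - y" "(f x - x) - (f y - y)"] by (simp add: dist_norm)
      finally have C: "dist (f x) (f y) \<le> (1 + s k) * dist x y" by (simp add: algebra_simps)
      have "norm (((g \<circ> f) x - x) - ((g \<circ> f) y - y))
           = norm (((g (f x) - f x) - (g (f y) - f y)) + ((f x - x) - (f y - y)))"
        by (simp add: algebra_simps)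
      also have "\<dots> \<le> c k * dist (f x) (f y) + s k * dist x y"
        using A B norm_triangle_ineq[of "(g (f x) - f x) - (g (f y) - f y)" "(f x - x) - (f y - y)"] by linarith
      also have "\<dots> \<le> c k * ((1 + s k) * dist x y) + s k * dist x y"
        using C c_pos[of k] by (simp add: mult_left_mono)
      also have "\<dots> = (s k + c k * (1 + s k)) * dist x y" by (simp add: algebra_simps)
      also have "\<dots> \<le> s (Suc k) * dist x y" using sc[of k] by (simp add: mult_right_mono)
      finally show "norm (((g \<circ> f) x - x) - ((g \<circ> f) y - y)) \<le> s (Suc k) * dist x y" .
    next
      fix x assume x: "x \<notin> open_sq"
      then have "f x = x" using If unfolding I_def by blast
      moreover have "g x = x" using g(3) x by blast
      ultimately show "(g \<circ> f) x = x" by simp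
    next
      fix x assume x: "x \<in> open_sq"
      then have "f x \<in> open_sq" using If unfolding I_def by blast
      then show "(g \<circ> f) x \<in> open_sq" using g(5) by simp
    next
      fix j assume j: "j < Suc k"
      show "(g \<circ> f) (e j) \<in> W (m j)"
      proof (cases "j = k")
        case True then show ?thesis using g by simp
      next
        case False
        then have "j < k" using j by simp
        then have "f (e j) \<in> P" unfolding P_def by blast
        moreover have "f (e j) \<in> W (m j)" using If \<open>j < k\<close> unfolding I_def by blast
        ultimately show ?thesis using g(4) by simp
      qed
    qed
    moreover have "R k f (g \<circ> f)"
      unfolding R_def o_def using g(4,6) unfolding P_def by blast
    ultimately show ?thesis by blast
  qed
  define nxt where "nxt k f = (SOME f'. I (Suc k) f' \<and> R k f f')" for k f
  have nxt: "I (Suc k) (nxt k f) \<and> R k f (nxt k f)" if "I k f" for k f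
    unfolding nxt_def using step[OF that] by (rule someI_ex)
  define Fs where "Fs = rec_nat id nxt"
  have Fs0: "Fs 0 = id" and FsS: "Fs (Suc k) = nxt k (Fs k)" for k unfolding Fs_def by simp_all
  have I_all: "I k (Fs k)" for k
  proof (induction k)
    case 0 show ?case unfolding I_def s_def Fs0 by simp
  next
    case (Suc k) then show ?case using nxt FsS by simp
  qed
  have R_all: "R k (Fs k) (Fs (Suc k))" for k using nxt I_all FsS by simp
  define d where "d x j = Fs (Suc j) x - Fs j x" for x j
  have d_le: "norm (d x j) \<le> \<delta> j" for x j
  proof -
    have "dist (Fs (Suc j) x) (Fs j x) \<le> \<delta> j" using R_all[of j] unfolding R_def by blast
    then show ?thesis by (simp add: d_def dist_norm)
  qed
  have "(\<lambda>n. (1/2::real)^n) sums (1 / (1 - 1/2))" by (rule geometric_sums) simp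
  then have "(\<lambda>n. \<epsilon>/4 * (1/2::real)^n) sums (\<epsilon>/4 * (1 / (1 - 1/2)))" by (rule sums_mult)
  then have dsums: "\<delta> sums (\<epsilon>/2)" unfolding \<delta>_def by simp
  have sumd: "summable \<delta>" using dsums by (rule sums_summable)
  have sumdv: "suminf \<delta> = \<epsilon>/2" using dsums by (rule sums_unique[symmetric])
  have sd: "summable (d x)" for x
    by (rule summable_comparison_test[OF _ sumd]) (use d_le in auto)
  have Fs_sum: "Fs k x = x + (\<Sum>j<k. d x j)" for k x
    using sum_lessThan_telescope[of "\<lambda>j. Fs j x" k] by (simp add: d_def Fs0)
  define h where "h x = x + suminf (d x)" for x
  have lim: "(\<lambda>k. Fs k x) \<longlonglongrightarrow> h x" for x
    unfolding Fs_sum h_def by (intro tendsto_add tendsto_const summable_LIMSEQ sd)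
  have I_lip: "norm ((Fs k x - x) - (Fs k y - y)) \<le> s k * dist x y" for k x y
    using I_all[of k] unfolding I_def by blast
  have I_out: "x \<notin> open_sq \<Longrightarrow> Fs k x = x" for k x
    using I_all[of k] unfolding I_def by blast
  have I_in: "x \<in> open_sq \<Longrightarrow> Fs k x \<in> open_sq" for k x
    using I_all[of k] unfolding I_def by blast
  have I_W: "j < k \<Longrightarrow> Fs k (e j) \<in> W (m j)" for k j
    using I_all[of k] unfolding I_def by blast
  have w_lip: "norm ((h x - x) - (h y - y)) \<le> \<eta> * dist x y" for x y
  proof -
    have "(\<lambda>k. norm ((Fs k x - x) - (Fs k y - y))) \<longlonglongrightarrow> norm ((h x - x) - (h y - y))"
      by (intro tendsto_norm tendsto_diff lim tendsto_const)
    moreover have "\<forall>k\<ge>0. norm ((Fs k x - x) - (Fs k y - y)) \<le> \<eta> * dist x y"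
    proof (intro allI impI)
      fix k :: nat
      have "norm ((Fs k x - x) - (Fs k y - y)) \<le> s k * dist x y" by (rule I_lip)
      also have "\<dots> \<le> \<eta> * dist x y" by (rule mult_right_mono[OF s_le(2) zero_le_dist])
      finally show "norm ((Fs k x - x) - (Fs k y - y)) \<le> \<eta> * dist x y" .
    qed
    ultimately show ?thesis by (intro LIMSEQ_le_const2) blast+
  qed
  have h_out: "h x = x" if x: "x \<notin> open_sq" for x
  proof -
    have "(\<lambda>k. Fs k x) = (\<lambda>k. x)" using I_out x by blast
    then have "(\<lambda>k. x) \<longlonglongrightarrow> h x" using lim[of x] by simp
    then show ?thesis by (simp add: LIMSEQ_const_iff)
  qed
  have h_e: "h (e j) = Fs (Suc j) (e j)" for j
  proof -
    have const: "Fs (Suc j + n) (e j) = Fs (Suc j) (e j)" for n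
    proof (induction n)
      case 0 show ?case by simp
    next
      case (Suc n)
      have "Fs (Suc (Suc j + n)) (e j) = Fs (Suc j + n) (e j)"
        using R_all[of "Suc j + n"] unfolding R_def by simp
      then show ?case using Suc by simp
    qed
    have "eventually (\<lambda>k. Fs k (e j) = Fs (Suc j) (e j)) sequentially"
      unfolding eventually_sequentially
    proof (intro exI allI impI)
      fix k assume "Suc j \<le> k"
      then obtain n where "k = Suc j + n" using le_Suc_ex by blast
      then show "Fs k (e j) = Fs (Suc j) (e j)" using const[of n] by simp
    qed
    then have "(\<lambda>k. Fs k (e j)) \<longlonglongrightarrow> Fs (Suc j) (e j)" by (rule tendsto_eventually)
    then show ?thesis using lim[of "e j"] LIMSEQ_unique by blast
  qed
  have h_W: "h (e j) \<in> W (m j)" for j using h_e I_W[of j "Suc j"] by simp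
  have h_disp: "dist (h x) x \<le> \<epsilon>/2" for x
  proof -
    have "dist (h x) x = norm (suminf (d x))" unfolding h_def dist_norm by simp
    also have "\<dots> \<le> suminf \<delta>" by (rule norm_suminf_le[OF d_le sumd])
    finally show ?thesis using sumdv by simp
  qed
  have upper: "dist (h x) (h y) \<le> L * dist x y" for x y
  proof -
    have "dist (h x) (h y) = norm ((x - y) + ((h x - x) - (h y - y)))"
      by (simp add: dist_norm algebra_simps)
    also have "\<dots> \<le> dist x y + \<eta> * dist x y"
      using w_lip[of x y] norm_triangle_ineq[of "x - y" "(h x - x) - (h y - y)"] by (simp add: dist_norm)
    also have "\<dots> = (1 + \<eta>) * dist x y" by (simp add: algebra_simps)
    also have "\<dots> \<le> L * dist x y" using eta(3) by (simp add: mult_right_mono)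
    finally show ?thesis .
  qed
  have lower: "dist x y / L \<le> dist (h x) (h y)" for x y
  proof -
    have "dist x y / L = (1 / L) * dist x y" by simp
    also have "\<dots> \<le> (1 - \<eta>) * dist x y" using eta(4) zero_le_dist by (rule mult_right_mono)
    also have "\<dots> = dist x y - \<eta> * dist x y" by (simp add: algebra_simps)
    also have "\<dots> \<le> norm ((x - y) + ((h x - x) - (h y - y)))"
      using w_lip[of x y] norm_diff_ineq[of "x - y" "(h x - x) - (h y - y)"] by (simp add: dist_norm)
    also have "\<dots> = dist (h x) (h y)" by (simp add: dist_norm algebra_simps)
    finally show ?thesis .
  qed
  have osq: "open_sq \<subseteq> sq" unfolding open_sq_def sq_def by (rule box_subset_cbox)
  have into: "h x \<in> sq" if x: "x \<in> sq" for x
  proof (cases "x \<in> open_sq")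
    case True
    have cl: "closed sq" unfolding sq_def by (rule closed_cbox)
    have ev: "eventually (\<lambda>k. Fs k x \<in> sq) sequentially"
      using I_in[OF True] osq by (intro always_eventually) blast
    show ?thesis by (rule Lim_in_closed_set[OF cl ev trivial_limit_sequentially lim])
  next
    case False then show ?thesis using h_out x by simp
  qed
  have onto: "\<exists>x\<in>sq. h x = y" if y: "y \<in> sq" for y
  proof (cases "y \<in> open_sq")
    case False then show ?thesis using h_out y by metis
  next
    case True
    define T where "T z = y - (h z - z)" for z
    have "dist (T a) (T b) \<le> \<eta> * dist a b" for a b
      using w_lip[of b a] unfolding T_def dist_norm by (simp add: algebra_simps norm_minus_commute)
    then obtain x where x: "T x = x" using banach_fix_type[of \<eta> T] eta by auto
    then have hx: "h x = y" unfolding T_def by (simp add: algebra_simps)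
    have "x \<in> open_sq"
    proof (rule ccontr)
      assume "x \<notin> open_sq"
      then have "h x = x" by (rule h_out)
      then show False using hx True \<open>x \<notin> open_sq\<close> by simp
    qed
    then show ?thesis using hx osq by blast
  qed
  have inj: "inj_on h sq"
  proof (rule inj_onI)
    fix a b assume "h a = h b"
    then have "dist a b / L \<le> 0" using lower[of a b] by simp
    then show "a = b" using lam by (simp add: divide_le_0_iff)
  qed
  have "h ` sq = sq" using into onto by blast
  then have "lambda_homeo L h sq sq"
    unfolding lambda_homeo_def bij_betw_def using inj upper lower by blast
  moreover have "\<forall>x\<in>sq - open_sq. h x = x" using h_out by blast
  moreover have "\<forall>x\<in>sq. dist (h x) x < \<epsilon>"
  proof
    fix x show "dist (h x) x < \<epsilon>" using h_disp[of x] eps by linarith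
  qed
  moreover have "\<forall>n. h ` V n \<subseteq> W n"
  proof (intro allI subsetI)
    fix n z assume "z \<in> h ` V n"
    then obtain x where x: "x \<in> V n" "z = h x" by blast
    then have "x \<in> U" unfolding U_def by blast
    then obtain j where j: "x = e j" using e_range by blast
    have "m j = n" using m[of j] x(1) j V_disj by blast
    then show "z \<in> W n" using h_W[of j] x j by simp
  qed
  ultimately show ?thesis by blast
qed

end
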